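(* Let $\Delta$ be a $k$-shellable simplicial complex and $\sigma$ a face of $\Delta$. Then $\operatorname{lk}_\Delta(\sigma)$ is $k$-shellable.
   Context: $\operatorname{lk}_\Delta(\sigma)=\{G\in\Delta: G\cap\sigma=\emptyset,\ G\cup\sigma\in\Delta\}$. $\langle F_1,\ldots,F_s\rangle$ denotes the simplicial complex with facets $F_1,\dots,F_s$. A simplicial complex $\Gamma$ of dimension $d$ is $k$-shellable ($1\le k\le d+1$) if its facets can be ordered $F_1,\ldots,F_r$ such that for every $j=2,\ldots,r$, $\Gamma_j=\langle F_j\rangle\cap\langle F_1,\ldots,F_{j-1}\rangle$ satisfies (i) $\Gamma_j$ is generated by a nonempty set of faces of $\langle F_j\rangle$ of dimension $|F_j|-k-1$; (ii) if $\Gamma_j$ has more than one facet, then for every two distinct facets $\sigma',\tau'$ of $\Gamma_j$, $F_j\subseteq\sigma'\cup\tau'$. *)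

theory Defs
  imports Main
begin

definition simplicial_complex :: "'a set set \<Rightarrow> bool" where
  "simplicial_complex \<Delta> \<longleftrightarrow> finite \<Delta> \<and> \<Delta> \<noteq> {} \<and> (\<forall>F\<in>\<Delta>. finite F)
     \<and> (\<forall>F\<in>\<Delta>. \<forall>G. G \<subseteq> F \<longrightarrow> G \<in> \<Delta>)"

definition facets :: "'a set set \<Rightarrow> 'a set set" where
  "facets \<Delta> = {F \<in> \<Delta>. \<forall>G\<in>\<Delta>. F \<subseteq> G \<longrightarrow> G = F}"

definition gen :: "'a set set \<Rightarrow> 'a set set" where
  "gen S = {G. \<exists>F\<in>S. G \<subseteq> F}"

definition link :: "'a set set \<Rightarrow> 'a set \<Rightarrow> 'a set set" where
  "link \<Delta> \<sigma> = {G \<in> \<Delta>. G \<inter> \<sigma> = {} \<and> G \<union> \<sigma> \<in> \<Delta>}"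

definition sc_dim :: "'a set set \<Rightarrow> int" where
  "sc_dim \<Delta> = int (Max (card ` \<Delta>)) - 1"

text \<open>k-shellability: an ordering F_1,...,F_r (0-based list here) of the facets such that
  for each j \<ge> 2 the complex \<Gamma>_j = <F_j> \<inter> <F_1,...,F_{j-1}> is generated by a nonempty
  set of faces of F_j of cardinality |F_j| - k (dimension |F_j|-k-1), and any two distinct
  facets of \<Gamma>_j cover F_j.\<close>
definition k_shellable :: "nat \<Rightarrow> 'a set set \<Rightarrow> bool" where
  "k_shellable k \<Delta> \<longleftrightarrow> 1 \<le> k \<and>
    (\<exists>Fs. distinct Fs \<and> set Fs = facets \<Delta> \<and>
      (\<forall>j. 0 < j \<and> j < length Fs \<longrightarrow>
        (let \<Gamma> = gen {Fs ! j} \<inter> gen (set (take j Fs)) in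
          (\<exists>S. S \<noteq> {} \<and> (\<forall>G\<in>S. G \<subseteq> Fs ! j \<and> card G + k = card (Fs ! j)) \<and> \<Gamma> = gen S)
          \<and> (\<forall>a\<in>facets \<Gamma>. \<forall>b\<in>facets \<Gamma>. a \<noteq> b \<longrightarrow> Fs ! j \<subseteq> a \<union> b))))"

end

theory Submission
  imports Defs
begin

lemma filter_nth_ex:
  "j < length (filter P xs) \<Longrightarrow> \<exists>i<length xs. P (xs!i) \<and> filter P xs ! j = xs ! i
     \<and> take j (filter P xs) = filter P (take i xs)"
proof (induction xs arbitrary: j)
  case Nil then show ?case by simp
next
  case (Cons x xs)
  show ?case
  proof (cases "P x")
    case True
    show ?thesis
    proof (cases j)
      case 0 then show ?thesis using True by (intro exI[of _ 0]) auto
    next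
      case (Suc j')
      with Cons.prems True have "j' < length (filter P xs)" by simp
      from Cons.IH[OF this] obtain i where "i<length xs" "P (xs!i)" "filter P xs ! j' = xs ! i"
        "take j' (filter P xs) = filter P (take i xs)" by blast
      then show ?thesis using True Suc by (intro exI[of _ "Suc i"]) auto
    qed
  next
    case False
    with Cons.prems have "j < length (filter P xs)" by simp
    from Cons.IH[OF this] obtain i where "i<length xs" "P (xs!i)" "filter P xs ! j = xs ! i"
      "take j (filter P xs) = filter P (take i xs)" by blast
    then show ?thesis using False by (intro exI[of _ "Suc i"]) auto
  qed
qed

lemma transfer:
  assumes fin: "finite F" "\<sigma> \<subseteq> F" and ex: "\<exists>E'\<in>E. \<sigma> \<subseteq> E'"
    and S: "S \<noteq> {}" "\<forall>G\<in>S. G \<subseteq> F \<and> card G + k = card F" "gen {F} \<inter> gen E = gen S"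
    and ii: "\<forall>a\<in>facets (gen {F} \<inter> gen E). \<forall>b\<in>facets (gen {F} \<inter> gen E). a \<noteq> b \<longrightarrow> F \<subseteq> a \<union> b"
  shows "let \<Gamma> = gen {F - \<sigma>} \<inter> gen ((\<lambda>F. F - \<sigma>) ` {E'\<in>E. \<sigma> \<subseteq> E'}) in
          (\<exists>S. S \<noteq> {} \<and> (\<forall>G\<in>S. G \<subseteq> F - \<sigma> \<and> card G + k = card (F - \<sigma>)) \<and> \<Gamma> = gen S)
          \<and> (\<forall>a\<in>facets \<Gamma>. \<forall>b\<in>facets \<Gamma>. a \<noteq> b \<longrightarrow> F - \<sigma> \<subseteq> a \<union> b)"
proof -
  define \<Gamma> where "\<Gamma> = gen {F} \<inter> gen E"
  define \<Gamma>' where "\<Gamma>' = gen {F - \<sigma>} \<inter> gen ((\<lambda>F. F - \<sigma>) ` {E'\<in>E. \<sigma> \<subseteq> E'})"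
  have L: "\<Gamma>' = {H. H \<inter> \<sigma> = {} \<and> H \<union> \<sigma> \<in> \<Gamma>}"
  proof (rule set_eqI, rule iffI)
    fix H assume "H \<in> \<Gamma>'"
    then obtain E' where "H \<subseteq> F - \<sigma>" "E' \<in> E" "\<sigma> \<subseteq> E'" "H \<subseteq> E' - \<sigma>"
      unfolding \<Gamma>'_def gen_def by auto
    then show "H \<in> {H. H \<inter> \<sigma> = {} \<and> H \<union> \<sigma> \<in> \<Gamma>}"
      unfolding \<Gamma>_def gen_def using fin by auto
  next
    fix H assume "H \<in> {H. H \<inter> \<sigma> = {} \<and> H \<union> \<sigma> \<in> \<Gamma>}"
    then obtain E' where "H \<inter> \<sigma> = {}" "H \<union> \<sigma> \<subseteq> F" "E' \<in> E" "H \<union> \<sigma> \<subseteq> E'"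
      unfolding \<Gamma>_def gen_def by auto
    then have "H \<in> gen {F - \<sigma>}" "E' - \<sigma> \<in> (\<lambda>F. F - \<sigma>) ` {E'\<in>E. \<sigma> \<subseteq> E'}" "H \<subseteq> E' - \<sigma>"
      unfolding gen_def by auto
    then show "H \<in> \<Gamma>'" unfolding \<Gamma>'_def gen_def by blast
  qed
  define S' where "S' = (\<lambda>G. G - \<sigma>) ` {G\<in>S. \<sigma> \<subseteq> G}"
  have g: "\<Gamma>' = gen S'"
  proof (rule set_eqI, rule iffI)
    fix H assume "H \<in> \<Gamma>'"
    then have "H \<inter> \<sigma> = {}" "H \<union> \<sigma> \<in> gen S" using L S(3) \<Gamma>_def by auto
    then obtain G where "G \<in> S" "H \<union> \<sigma> \<subseteq> G" "H \<inter> \<sigma> = {}" unfolding gen_def by auto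
    then have "G - \<sigma> \<in> S'" "H \<subseteq> G - \<sigma>" unfolding S'_def by auto
    then show "H \<in> gen S'" unfolding gen_def by auto
  next
    fix H assume "H \<in> gen S'"
    then obtain G where "G \<in> S" "\<sigma> \<subseteq> G" "H \<subseteq> G - \<sigma>" unfolding gen_def S'_def by auto
    then have "H \<inter> \<sigma> = {}" "H \<union> \<sigma> \<in> gen S" unfolding gen_def by auto
    then show "H \<in> \<Gamma>'" using L S(3) \<Gamma>_def by auto
  qed
  have "\<sigma> \<in> \<Gamma>" unfolding \<Gamma>_def gen_def using fin ex by blast
  then have "\<sigma> \<in> gen S" using S(3) unfolding \<Gamma>_def by simp
  then obtain G0 where "G0 \<in> S" "\<sigma> \<subseteq> G0" unfolding gen_def by blast
  then have "G0 - \<sigma> \<in> S'" unfolding S'_def by blast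
  then have "S' \<noteq> {}" by blast
  moreover have "\<forall>G\<in>S'. G \<subseteq> F - \<sigma> \<and> card G + k = card (F - \<sigma>)"
  proof
    fix H assume "H \<in> S'"
    then obtain G where G: "G \<in> S" "\<sigma> \<subseteq> G" "H = G - \<sigma>" unfolding S'_def by blast
    have GF: "G \<subseteq> F" "card G + k = card F" using S(2) G(1) by auto
    have fG: "finite G" using GF fin finite_subset by blast
    have fs: "finite \<sigma>" using fin finite_subset by blast
    have "card H = card G - card \<sigma>" using G fs card_Diff_subset by metis
    moreover have "card (F - \<sigma>) = card F - card \<sigma>" using fin fs card_Diff_subset by metis
    moreover have "card \<sigma> \<le> card G" using G fG card_mono by metis
    ultimately show "H \<subseteq> F - \<sigma> \<and> card H + k = card (F - \<sigma>)" using GF G by auto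
  qed
  moreover have fac: "a \<union> \<sigma> \<in> facets \<Gamma> \<and> a \<inter> \<sigma> = {}" if "a \<in> facets \<Gamma>'" for a
  proof -
    have a: "a \<in> \<Gamma>'" "\<forall>G\<in>\<Gamma>'. a \<subseteq> G \<longrightarrow> G = a" using that unfolding facets_def by auto
    have mx: "c = a \<union> \<sigma>" if "c \<in> \<Gamma>" "a \<union> \<sigma> \<subseteq> c" for c
    proof -
      have e: "(c - \<sigma>) \<union> \<sigma> = c" using that by blast
      have "(c - \<sigma>) \<inter> \<sigma> = {}" by blast
      then have "c - \<sigma> \<in> \<Gamma>'" unfolding L using e that(1) by simp
      moreover have "a \<subseteq> c - \<sigma>" using that a L by blast
      ultimately have "c - \<sigma> = a" using a by blast
      then show ?thesis using that by blast
    qed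
    moreover have "a \<inter> \<sigma> = {}" "a \<union> \<sigma> \<in> \<Gamma>" using a(1) L by auto
    ultimately show ?thesis unfolding facets_def mem_Collect_eq using mx by blast
  qed
  moreover have "\<forall>a\<in>facets \<Gamma>'. \<forall>b\<in>facets \<Gamma>'. a \<noteq> b \<longrightarrow> F - \<sigma> \<subseteq> a \<union> b"
  proof (intro ballI impI)
    fix a b assume ab: "a \<in> facets \<Gamma>'" "b \<in> facets \<Gamma>'" "a \<noteq> b"
    have "a \<union> \<sigma> \<noteq> b \<union> \<sigma>" using fac[OF ab(1)] fac[OF ab(2)] ab(3) by blast
    moreover have ii': "\<forall>a\<in>facets \<Gamma>. \<forall>b\<in>facets \<Gamma>. a \<noteq> b \<longrightarrow> F \<subseteq> a \<union> b" using ii unfolding \<Gamma>_def .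
    ultimately have "F \<subseteq> a \<union> \<sigma> \<union> (b \<union> \<sigma>)" using fac[OF ab(1)] fac[OF ab(2)] by (meson ii')
    then show "F - \<sigma> \<subseteq> a \<union> b" by blast
  qed
  ultimately have "(\<exists>S. S \<noteq> {} \<and> (\<forall>G\<in>S. G \<subseteq> F - \<sigma> \<and> card G + k = card (F - \<sigma>)) \<and> \<Gamma>' = gen S)
          \<and> (\<forall>a\<in>facets \<Gamma>'. \<forall>b\<in>facets \<Gamma>'. a \<noteq> b \<longrightarrow> F - \<sigma> \<subseteq> a \<union> b)"
    using g by blast
  then show ?thesis unfolding Let_def \<Gamma>'_def .
  
qed

lemma link_facets:
  assumes "simplicial_complex \<Delta>"
  shows "facets (link \<Delta> \<sigma>) = (\<lambda>F. F - \<sigma>) ` {F \<in> facets \<Delta>. \<sigma> \<subseteq> F}"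
proof -
  from assms have fin: "finite \<Delta>" and down: "\<forall>F\<in>\<Delta>. \<forall>G. G \<subseteq> F \<longrightarrow> G \<in> \<Delta>"
    unfolding simplicial_complex_def by auto
  show ?thesis
  proof (rule set_eqI, rule iffI)
    fix G assume G: "G \<in> facets (link \<Delta> \<sigma>)"
    then have Gl: "G \<in> \<Delta>" "G \<inter> \<sigma> = {}" "G \<union> \<sigma> \<in> \<Delta>"
      and Gm: "\<forall>H\<in>link \<Delta> \<sigma>. G \<subseteq> H \<longrightarrow> H = G"
      unfolding facets_def link_def by auto
    from finite_has_maximal2[OF fin Gl(3)] obtain F where F0: "F \<in> \<Delta>"
      and F1: "G \<union> \<sigma> \<le> F \<and> (\<forall>b\<in>\<Delta>. F \<le> b \<longrightarrow> F = b)" ..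
    have F: "F \<in> \<Delta>" "G \<union> \<sigma> \<subseteq> F" "\<forall>b\<in>\<Delta>. F \<subseteq> b \<longrightarrow> b = F"
      using F0 F1 by auto
    have Ff: "F \<in> facets \<Delta>" using F unfolding facets_def by simp
    have e: "(F - \<sigma>) \<union> \<sigma> = F" using F(2) by blast
    have "F - \<sigma> \<in> \<Delta>" using down F(1) by blast
    then have "F - \<sigma> \<in> link \<Delta> \<sigma>" unfolding link_def using e F(1) by auto
    moreover have "G \<subseteq> F - \<sigma>" using F(2) Gl(2) by blast
    ultimately have "F - \<sigma> = G" using Gm by blast
    then show "G \<in> (\<lambda>F. F - \<sigma>) ` {F \<in> facets \<Delta>. \<sigma> \<subseteq> F}" using Ff F(2) by blast
  next
    fix G assume "G \<in> (\<lambda>F. F - \<sigma>) ` {F \<in> facets \<Delta>. \<sigma> \<subseteq> F}"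
    then obtain F where F: "F \<in> facets \<Delta>" "\<sigma> \<subseteq> F" "G = F - \<sigma>" by (auto simp: image_iff)
    have F1: "F \<in> \<Delta>" "\<forall>b\<in>\<Delta>. F \<subseteq> b \<longrightarrow> b = F" using F(1) unfolding facets_def by simp_all
    have e: "(F - \<sigma>) \<union> \<sigma> = F" using F(2) by blast
    have "F - \<sigma> \<in> \<Delta>" using down F1(1) by blast
    then have Gl: "G \<in> link \<Delta> \<sigma>" unfolding link_def using e F1(1) F(3) by auto
    have "H = G" if "H \<in> link \<Delta> \<sigma>" "G \<subseteq> H" for H
    proof -
      have H: "H \<inter> \<sigma> = {}" "H \<union> \<sigma> \<in> \<Delta>" using that(1) unfolding link_def by auto
      have "F \<subseteq> H \<union> \<sigma>" using that(2) F(3) by blast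
      then have "H \<union> \<sigma> = F" using F1(2) H(2) by blast
      then show ?thesis using H(1) F(3) by blast
    qed
    then show "G \<in> facets (link \<Delta> \<sigma>)" using Gl unfolding facets_def by blast
  qed
qed

theorem theorem2p6:
  fixes \<Delta> :: "'a set set" and \<sigma> :: "'a set" and k :: nat
  assumes "simplicial_complex \<Delta>"
    and "int k \<le> sc_dim \<Delta> + 1"
    and "k_shellable k \<Delta>"
    and "\<sigma> \<in> \<Delta>"
  shows "k_shellable k (link \<Delta> \<sigma>)"
proof -
  from assms(1) have finF: "\<forall>F\<in>\<Delta>. finite F"
    unfolding simplicial_complex_def by auto
  from assms(3) obtain Fs where k1: "1 \<le> k" and d: "distinct Fs" and sF: "set Fs = facets \<Delta>"
    and cond: "\<forall>j. 0 < j \<and> j < length Fs \<longrightarrow>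
        (let \<Gamma> = gen {Fs ! j} \<inter> gen (set (take j Fs)) in
          (\<exists>S. S \<noteq> {} \<and> (\<forall>G\<in>S. G \<subseteq> Fs ! j \<and> card G + k = card (Fs ! j)) \<and> \<Gamma> = gen S)
          \<and> (\<forall>a\<in>facets \<Gamma>. \<forall>b\<in>facets \<Gamma>. a \<noteq> b \<longrightarrow> Fs ! j \<subseteq> a \<union> b))"
    unfolding k_shellable_def by blast
  define P where "P = (\<lambda>F::'a set. \<sigma> \<subseteq> F)"
  define f where "f = (\<lambda>F::'a set. F - \<sigma>)"
  define Ls where "Ls = map f (filter P Fs)"
  have inj: "inj_on f (set (filter P Fs))"
  proof (rule inj_onI)
    fix x y assume "x \<in> set (filter P Fs)" "y \<in> set (filter P Fs)" "f x = f y"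
    then have "\<sigma> \<subseteq> x" "\<sigma> \<subseteq> y" "x - \<sigma> = y - \<sigma>" unfolding P_def f_def by auto
    then show "x = y" by blast
  qed
  have dL: "distinct Ls" unfolding Ls_def using d inj by (simp add: distinct_map)
  have sL: "set Ls = facets (link \<Delta> \<sigma>)"
    unfolding link_facets[OF assms(1)] Ls_def using sF by (auto simp: P_def f_def)
  have condL: "let \<Gamma> = gen {Ls ! j} \<inter> gen (set (take j Ls)) in
          (\<exists>S. S \<noteq> {} \<and> (\<forall>G\<in>S. G \<subseteq> Ls ! j \<and> card G + k = card (Ls ! j)) \<and> \<Gamma> = gen S)
          \<and> (\<forall>a\<in>facets \<Gamma>. \<forall>b\<in>facets \<Gamma>. a \<noteq> b \<longrightarrow> Ls ! j \<subseteq> a \<union> b)"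
    if j: "0 < j" "j < length Ls" for j
  proof -
    have jl: "j < length (filter P Fs)" using j unfolding Ls_def by simp
    obtain i where i: "i < length Fs" "P (Fs ! i)" "filter P Fs ! j = Fs ! i"
      "take j (filter P Fs) = filter P (take i Fs)"
      using filter_nth_ex[OF jl] by blast
    have "take j (filter P Fs) \<noteq> []" using j jl by (auto simp: take_eq_Nil)
    then have ne: "filter P (take i Fs) \<noteq> []" using i(4) by simp
    then obtain E' where E': "E' \<in> set (take i Fs)" "\<sigma> \<subseteq> E'"
      by (auto simp: P_def filter_empty_conv)
    have i0: "0 < i" using E' by (cases i) auto
    have Lj: "Ls ! j = Fs ! i - \<sigma>" unfolding Ls_def using jl i(3) by (simp add: f_def)
    have tL: "set (take j Ls) = (\<lambda>F. F - \<sigma>) ` {E'\<in>set (take i Fs). \<sigma> \<subseteq> E'}"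
      unfolding Ls_def take_map i(4) by (auto simp: P_def f_def)
    have "Fs ! i \<in> \<Delta>" using i(1) sF unfolding facets_def by (metis (no_types, lifting) mem_Collect_eq nth_mem)
    then have fin: "finite (Fs ! i)" using finF by blast
    have ci: "(\<exists>S. S \<noteq> {} \<and> (\<forall>G\<in>S. G \<subseteq> Fs ! i \<and> card G + k = card (Fs ! i)) \<and> gen {Fs ! i} \<inter> gen (set (take i Fs)) = gen S)
          \<and> (\<forall>a\<in>facets (gen {Fs ! i} \<inter> gen (set (take i Fs))). \<forall>b\<in>facets (gen {Fs ! i} \<inter> gen (set (take i Fs))). a \<noteq> b \<longrightarrow> Fs ! i \<subseteq> a \<union> b)"
      using cond[rule_format, OF conjI[OF i0 i(1)]] unfolding Let_def .
    from conjunct1[OF ci] obtain S where S: "S \<noteq> {}" "\<forall>G\<in>S. G \<subseteq> Fs ! i \<and> card G + k = card (Fs ! i)"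
      "gen {Fs ! i} \<inter> gen (set (take i Fs)) = gen S"
      by blast
    note ii = conjunct2[OF ci]
    have P': "\<sigma> \<subseteq> Fs ! i" using i(2) P_def by simp
    show ?thesis unfolding Lj tL
      by (rule transfer[OF fin P' _ S ii]) (use E' in blast)
  qed
  show ?thesis unfolding k_shellable_def
    using k1 dL sL condL by blast
qed

end
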